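(* Let $\mathcal{S}$ be a square-free staged tree and let $u$ be a (possibly singleton) stage of $\mathcal{S}$ with situations $s_q$, $q\in Q_u$. Suppose each $s_q$ is the root of a subtree $\mathcal{T}_q$ and that the collection $\{\mathcal{T}_q\}_{q\in Q_u}$ is conditionally saturated. Let $\mathcal{S}'$ be the staged tree obtained by the resize operator that contracts each $\mathcal{T}_q$ into a floret $\mathcal{F}_q$, $q\in Q_u$. Let $\alpha>0$, let $\mathcal{D}=(N_\lambda)_{\lambda\in\Lambda(\mathcal{S})}$ be a complete data sample on $\mathcal{S}$ and $\mathcal{D}'$ the sample on $\mathcal{S}'$ obtained by transferring each $N_\lambda$ to the corresponding root-to-leaf path of $\mathcal{S}'$. Then $\mathrm{BDepu}(\mathcal{S},\mathcal{D};\alpha)=\mathrm{BDepu}(\mathcal{S}',\mathcal{D}';\alpha)$.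
   Context: An event tree is a finite directed rooted tree whose edges are directed away from the root; nodes with no outgoing edges are leaves, all other nodes are situations. A staged tree $\mathcal{S}$ is an event tree together with a partition of its situations into stages $u_1,\dots,u_J$ such that all situations in $u_j$ have the same number $r_j$ of outgoing edges, labelled $1,\dots,r_j$ at each situation of $u_j$; the $k$-th edge of every situation in $u_j$ carries the same conditional transition probability $\theta_{jk}$. A staged tree is square-free if no two situations on the same root-to-leaf path lie in the same stage. $\Lambda(\mathcal{S})$ is the set of root-to-leaf paths and, for an edge $e$, $\Lambda(e)$ is the set of root-to-leaf paths containing $e$. A subtree $\mathcal{T}$ rooted at a situation $s$ consists of $s$, some of its descendants and the edges between them, such that with every non-subleaf node it contains all of its outgoing edges; its subleaves are its nodes having no outgoing edges within $\mathcal{T}$. The collection $\{\mathcal{T}_q\}_{q\in Q_u}$ (with $\mathcal{T}_q$ rooted at $s_q\in u$) is conditionally saturated if the $\mathcal{T}_q$ are identical (same topology, with corresponding non-subleaf situations in the same stage and corresponding edges carrying the same labels), no stage is repeated inside any single $\mathcal{T}_q$ apart from through the correspondence, and the stages of the non-root, non-subleaf situations of the $\mathcal{T}_q$ contain no situations outside $\bigcup_q\mathcal{T}_q$. The resize operator contracts each $\mathcal{T}_q$ into a floret $\mathcal{F}_q$: $s_q$ is given one outgoing edge for each root-to-subleaf path of $\mathcal{T}_q$, entering the corresponding subleaf (with everything below unchanged), with transition probability the product of the transition probabilities along that path; the roots $s_q$, $q\in Q_u$, remain together in one stage with these new edges. This induces a bijection between root-to-leaf paths of $\mathcal{S}$ and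 of $\mathcal{S}'$. A complete data sample $\mathcal{D}$ assigns to each root-to-leaf path $\lambda$ a number $N_\lambda\ge 0$ of units. For stage $u_j$, $n_{jk}$ is the number of units whose path passes through the $k$-th outgoing edge of some situation in $u_j$, $\overline{n}_j=\sum_k n_{jk}$. The BDepu score with imaginary sample size $\alpha>0$ is $$\mathrm{BDepu}(\mathcal{S},\mathcal{D};\alpha)=\prod_{j=1}^{J}\left[\frac{\Gamma(\overline{\alpha}_j)}{\Gamma(\overline{\alpha}_j+\overline{n}_j)}\prod_{k=1}^{r_j}\frac{\Gamma(\alpha_{jk}+n_{jk})}{\Gamma(\alpha_{jk})}\right],\quad \alpha_{jk}=\frac{\alpha}{|\Lambda(\mathcal{S})|}\sum_{m=1}^{h_j}|\Lambda(e^m_{jk})|,\quad \overline{\alpha}_j=\sum_{k=1}^{r_j}\alpha_{jk},$$ where $h_j$ is the number of situations in $u_j$ and $e^m_{jk}$ is the $k$-th outgoing edge of the $m$-th situation of $u_j$. *)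

theory Defs
  imports "HOL-Analysis.Gamma_Function" "HOL-Library.List_Lexorder"
begin

text \<open>Representation of a staged tree: a finite vertex set V, a root r, a child map ch
  (the k-th outgoing edge of v, k = 0,1,..., enters ch v ! k; so the paper's label k+1
  corresponds to list index k) and a stage-label function st on situations; the stages
  are the fibres of st on the situations.\<close>

definition tree_edges :: "'v set \<Rightarrow> ('v \<Rightarrow> 'v list) \<Rightarrow> ('v \<times> 'v) set" where
  "tree_edges V ch = {(a, b). a \<in> V \<and> b \<in> set (ch a)}"

definition event_tree :: "'v set \<Rightarrow> 'v \<Rightarrow> ('v \<Rightarrow> 'v list) \<Rightarrow> bool" where
  "event_tree V r ch \<longleftrightarrow>
     finite V \<and> r \<in> V \<and>
     (\<forall>v\<in>V. set (ch v) \<subseteq> V \<and> distinct (ch v) \<and> r \<notin> set (ch v)) \<and>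
     (\<forall>w\<in>V. w \<noteq> r \<longrightarrow> (\<exists>!v. v \<in> V \<and> w \<in> set (ch v))) \<and>
     (\<forall>w\<in>V. (r, w) \<in> (tree_edges V ch)\<^sup>*) \<and>
     (\<forall>v\<in>V. (v, v) \<notin> (tree_edges V ch)\<^sup>+)"

definition is_situation :: "'v set \<Rightarrow> ('v \<Rightarrow> 'v list) \<Rightarrow> 'v \<Rightarrow> bool" where
  "is_situation V ch v \<longleftrightarrow> v \<in> V \<and> ch v \<noteq> []"

definition leaves :: "'v set \<Rightarrow> ('v \<Rightarrow> 'v list) \<Rightarrow> 'v set" where
  "leaves V ch = {l \<in> V. ch l = []}"

definition stage :: "'v set \<Rightarrow> ('v \<Rightarrow> 'v list) \<Rightarrow> ('v \<Rightarrow> 's) \<Rightarrow> 's \<Rightarrow> 'v set" where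
  "stage V ch st j = {v. is_situation V ch v \<and> st v = j}"

definition stage_labels :: "'v set \<Rightarrow> ('v \<Rightarrow> 'v list) \<Rightarrow> ('v \<Rightarrow> 's) \<Rightarrow> 's set" where
  "stage_labels V ch st = st ` {v. is_situation V ch v}"

definition staged_tree :: "'v set \<Rightarrow> 'v \<Rightarrow> ('v \<Rightarrow> 'v list) \<Rightarrow> ('v \<Rightarrow> 's) \<Rightarrow> bool" where
  "staged_tree V r ch st \<longleftrightarrow> event_tree V r ch \<and>
     (\<forall>v w. is_situation V ch v \<and> is_situation V ch w \<and> st v = st w
        \<longrightarrow> length (ch v) = length (ch w))"

definition square_free :: "'v set \<Rightarrow> ('v \<Rightarrow> 'v list) \<Rightarrow> ('v \<Rightarrow> 's) \<Rightarrow> bool" where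
  "square_free V ch st \<longleftrightarrow>
     (\<forall>v w. is_situation V ch v \<and> is_situation V ch w \<and> st v = st w
        \<longrightarrow> (v, w) \<notin> (tree_edges V ch)\<^sup>+)"

fun nodeAt :: "('v \<Rightarrow> 'v list) \<Rightarrow> 'v \<Rightarrow> nat list \<Rightarrow> 'v" where
  "nodeAt ch v [] = v"
| "nodeAt ch v (k # ks) = nodeAt ch (ch v ! k) ks"

text \<open>A subtree rooted at s is described by the set P of label sequences (from s) of its
  non-subleaf nodes; its nodes are these together with all their children, and its
  subleaves are the children not in P.\<close>
definition valid_subtree :: "'v set \<Rightarrow> ('v \<Rightarrow> 'v list) \<Rightarrow> 'v \<Rightarrow> nat list set \<Rightarrow> bool" where
  "valid_subtree V ch s P \<longleftrightarrow>
     [] \<in> P \<and>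
     (\<forall>p\<in>P. is_situation V ch (nodeAt ch s p)) \<and>
     (\<forall>p k. p @ [k] \<in> P \<longrightarrow> p \<in> P \<and> k < length (ch (nodeAt ch s p)))"

definition subtree_nodes :: "('v \<Rightarrow> 'v list) \<Rightarrow> 'v \<Rightarrow> nat list set \<Rightarrow> 'v set" where
  "subtree_nodes ch s P =
     nodeAt ch s ` P \<union> {nodeAt ch s (p @ [k]) | p k. p \<in> P \<and> k < length (ch (nodeAt ch s p))}"

definition subleaf_pos :: "('v \<Rightarrow> 'v list) \<Rightarrow> 'v \<Rightarrow> nat list set \<Rightarrow> nat list set" where
  "subleaf_pos ch s P = {p @ [k] | p k. p \<in> P \<and> k < length (ch (nodeAt ch s p)) \<and> p @ [k] \<notin> P}"

definition cond_saturated ::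
  "'v set \<Rightarrow> ('v \<Rightarrow> 'v list) \<Rightarrow> ('v \<Rightarrow> 's) \<Rightarrow> 's \<Rightarrow> ('v \<Rightarrow> nat list set) \<Rightarrow> bool" where
  "cond_saturated V ch st u T \<longleftrightarrow>
     (\<forall>s\<in>stage V ch st u. valid_subtree V ch s (T s)) \<and>
     \<comment> \<open>identical: same topology (w.r.t. labels) and corresponding situations in the same stage\<close>
     (\<forall>s\<in>stage V ch st u. \<forall>s'\<in>stage V ch st u. T s = T s' \<and>
        (\<forall>p\<in>T s. st (nodeAt ch s p) = st (nodeAt ch s' p))) \<and>
     \<comment> \<open>no stage repeated inside a single subtree\<close>
     (\<forall>s\<in>stage V ch st u. \<forall>p\<in>T s. \<forall>p'\<in>T s. p \<noteq> p'
        \<longrightarrow> st (nodeAt ch s p) \<noteq> st (nodeAt ch s p')) \<and>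
     \<comment> \<open>stages of non-root non-subleaf situations lie inside the union of the subtrees\<close>
     (\<forall>s\<in>stage V ch st u. \<forall>p\<in>T s. p \<noteq> [] \<longrightarrow>
        (\<forall>w. is_situation V ch w \<and> st w = st (nodeAt ch s p) \<longrightarrow>
           (\<exists>s'\<in>stage V ch st u. \<exists>p'\<in>T s'. w = nodeAt ch s' p')))"

text \<open>The resize operator: the non-root non-subleaf nodes of the subtrees are removed, and
  each root s gets one edge per root-to-subleaf path (ordered consistently across the stage
  by the lexicographic order of the label sequences), entering that subleaf.\<close>
definition resize_V ::
  "'v set \<Rightarrow> ('v \<Rightarrow> 'v list) \<Rightarrow> ('v \<Rightarrow> 's) \<Rightarrow> 's \<Rightarrow> ('v \<Rightarrow> nat list set) \<Rightarrow> 'v set" where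
  "resize_V V ch st u T =
     V - {nodeAt ch s p | s p. s \<in> stage V ch st u \<and> p \<in> T s \<and> p \<noteq> []}"

definition resize_ch ::
  "'v set \<Rightarrow> ('v \<Rightarrow> 'v list) \<Rightarrow> ('v \<Rightarrow> 's) \<Rightarrow> 's \<Rightarrow> ('v \<Rightarrow> nat list set) \<Rightarrow> 'v \<Rightarrow> 'v list" where
  "resize_ch V ch st u T v =
     (if v \<in> stage V ch st u
      then map (nodeAt ch v) (sorted_list_of_set (subleaf_pos ch v (T v)))
      else ch v)"

text \<open>Root-to-leaf paths correspond to leaves; a data sample N assigns counts to leaves.
  Edges: the k-th edge of v enters ch v ! k, and its root-to-leaf paths are the leaves below.\<close>
definition leaves_below :: "'v set \<Rightarrow> ('v \<Rightarrow> 'v list) \<Rightarrow> 'v \<Rightarrow> 'v set" where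
  "leaves_below V ch w = {l \<in> leaves V ch. (w, l) \<in> (tree_edges V ch)\<^sup>*}"

definition n_count :: "'v set \<Rightarrow> ('v \<Rightarrow> 'v list) \<Rightarrow> ('v \<Rightarrow> 's) \<Rightarrow> ('v \<Rightarrow> nat) \<Rightarrow> 's \<Rightarrow> nat \<Rightarrow> nat" where
  "n_count V ch st N j k =
     (\<Sum>l\<in>{l \<in> leaves V ch. \<exists>v\<in>stage V ch st j. l \<in> leaves_below V ch (ch v ! k)}. N l)"

definition alpha_jk :: "'v set \<Rightarrow> ('v \<Rightarrow> 'v list) \<Rightarrow> ('v \<Rightarrow> 's) \<Rightarrow> real \<Rightarrow> 's \<Rightarrow> nat \<Rightarrow> real" where
  "alpha_jk V ch st \<alpha> j k =
     \<alpha> / real (card (leaves V ch)) *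
       (\<Sum>v\<in>stage V ch st j. real (card (leaves_below V ch (ch v ! k))))"

definition stage_arity :: "'v set \<Rightarrow> ('v \<Rightarrow> 'v list) \<Rightarrow> ('v \<Rightarrow> 's) \<Rightarrow> 's \<Rightarrow> nat" where
  "stage_arity V ch st j = length (ch (SOME v. v \<in> stage V ch st j))"

definition BDepu ::
  "'v set \<Rightarrow> 'v \<Rightarrow> ('v \<Rightarrow> 'v list) \<Rightarrow> ('v \<Rightarrow> 's) \<Rightarrow> ('v \<Rightarrow> nat) \<Rightarrow> real \<Rightarrow> real" where
  "BDepu V r ch st N \<alpha> =
     (\<Prod>j\<in>stage_labels V ch st.
        (let rj = stage_arity V ch st j;
             a = alpha_jk V ch st \<alpha> j;
             n = (\<lambda>k. real (n_count V ch st N j k));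
             abar = (\<Sum>k<rj. a k);
             nbar = (\<Sum>k<rj. n k)
         in Gamma abar / Gamma (abar + nbar) * (\<Prod>k<rj. Gamma (a k + n k) / Gamma (a k))))"

end

theory Submission
  imports Defs
begin


lemma nodeAt_snoc: "nodeAt ch s (p @ [k]) = ch (nodeAt ch s p) ! k"
  by (induction p arbitrary: s) auto

lemma sum_nth_distinct:
  fixes f :: "'a \<Rightarrow> 'b::comm_monoid_add"
  assumes "distinct xs" shows "(\<Sum>k<length xs. f (xs ! k)) = (\<Sum>x\<in>set xs. f x)"
proof -
  have "inj_on ((!) xs) {..<length xs}" using assms by (simp add: inj_on_def nth_eq_iff_index_eq)
  moreover have "(!) xs ` {..<length xs} = set xs" by (auto simp: in_set_conv_nth)
  ultimately show ?thesis using sum.reindex[of "(!) xs" "{..<length xs}" f] by simp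
qed

lemma prod_nth_distinct:
  fixes f :: "'a \<Rightarrow> 'b::comm_monoid_mult"
  assumes "distinct xs" shows "(\<Prod>k<length xs. f (xs ! k)) = (\<Prod>x\<in>set xs. f x)"
proof -
  have "inj_on ((!) xs) {..<length xs}" using assms by (simp add: inj_on_def nth_eq_iff_index_eq)
  moreover have "(!) xs ` {..<length xs} = set xs" by (auto simp: in_set_conv_nth)
  ultimately show ?thesis using prod.reindex[of "(!) xs" "{..<length xs}" f] by simp
qed

locale etree =
  fixes V :: "'v set" and r :: 'v and ch :: "'v \<Rightarrow> 'v list"
  assumes et: "event_tree V r ch"
begin

abbreviation "E \<equiv> tree_edges V ch"
abbreviation "LB \<equiv> leaves_below V ch"

lemma finV: "finite V" and rV: "r \<in> V"
  and chV: "v \<in> V \<Longrightarrow> set (ch v) \<subseteq> V"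
  and dist: "v \<in> V \<Longrightarrow> distinct (ch v)"
  and notr: "v \<in> V \<Longrightarrow> r \<notin> set (ch v)"
  and upar: "w \<in> V \<Longrightarrow> w \<noteq> r \<Longrightarrow> \<exists>!v. v \<in> V \<and> w \<in> set (ch v)"
  and acyc: "v \<in> V \<Longrightarrow> (v, v) \<notin> E\<^sup>+"
  using et unfolding event_tree_def by auto

lemma E_iff: "(a, b) \<in> E \<longleftrightarrow> a \<in> V \<and> b \<in> set (ch a)"
  by (simp add: tree_edges_def)

lemma par_unique: "a \<in> V \<Longrightarrow> b \<in> V \<Longrightarrow> x \<in> set (ch a) \<Longrightarrow> x \<in> set (ch b) \<Longrightarrow> a = b"
  using upar[of x] chV notr by blast

lemma rt_V: "(a, b) \<in> E\<^sup>* \<Longrightarrow> a \<in> V \<Longrightarrow> b \<in> V"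
  by (induction rule: rtrancl_induct) (use chV E_iff in auto)

lemma acyc': "(v, v) \<notin> E\<^sup>+"
proof
  assume "(v, v) \<in> E\<^sup>+"
  then obtain y where "(v, y) \<in> E" by (meson tranclD)
  then have "v \<in> V" by (simp add: E_iff)
  with acyc \<open>(v, v) \<in> E\<^sup>+\<close> show False by blast
qed

lemma comparable:
  assumes "(a, x) \<in> E\<^sup>*" "(b, x) \<in> E\<^sup>*"
  shows "(a, b) \<in> E\<^sup>* \<or> (b, a) \<in> E\<^sup>*"
  using assms
proof (induction rule: rtrancl_induct)
  case base then show ?case by simp
next
  case (step y z)
  from step.prems show ?case
  proof (cases rule: rtranclE)
    case base then show ?thesis using step by auto
  next
    case (step w)
    have "w = y" using par_unique step \<open>(y,z) \<in> E\<close> by (auto simp: E_iff)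
    then show ?thesis using \<open>(b, w) \<in> E\<^sup>*\<close> \<open>(b, y) \<in> E\<^sup>* \<Longrightarrow> _\<close> by blast
  qed
qed

lemma LB_leaves: "LB w \<subseteq> leaves V ch"
  by (auto simp: leaves_below_def)

lemma fin_leaves: "finite (leaves V ch)"
  using finV by (auto simp: leaves_def)

lemma fin_LB: "finite (LB w)"
  using LB_leaves fin_leaves finite_subset by blast

lemma LB_sit:
  assumes "v \<in> V" "ch v \<noteq> []"
  shows "LB v = (\<Union>k<length (ch v). LB (ch v ! k))"
proof
  show "LB v \<subseteq> (\<Union>k<length (ch v). LB (ch v ! k))"
  proof
    fix l assume l: "l \<in> LB v"
    then have "(v, l) \<in> E\<^sup>*" "l \<in> leaves V ch" by (auto simp: leaves_below_def)
    then have "l \<noteq> v" using assms by (auto simp: leaves_def)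
    with \<open>(v, l) \<in> E\<^sup>*\<close> have "(v, l) \<in> E\<^sup>+" by (simp add: rtrancl_eq_or_trancl)
    then obtain y where "(v, y) \<in> E" "(y, l) \<in> E\<^sup>*" using tranclD by metis
    then obtain k where "k < length (ch v)" "y = ch v ! k" by (auto simp: E_iff in_set_conv_nth)
    then show "l \<in> (\<Union>k<length (ch v). LB (ch v ! k))"
      using \<open>(y, l) \<in> E\<^sup>*\<close> \<open>l \<in> leaves V ch\<close> by (auto simp: leaves_below_def)
  qed
next
  show "(\<Union>k<length (ch v). LB (ch v ! k)) \<subseteq> LB v"
  proof
    fix l assume "l \<in> (\<Union>k<length (ch v). LB (ch v ! k))"
    then obtain k where k: "k < length (ch v)" "l \<in> LB (ch v ! k)" by auto
    then have "(v, ch v ! k) \<in> E" using assms by (auto simp: E_iff)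
    then show "l \<in> LB v" using k by (auto simp: leaves_below_def)
  qed
qed

lemma LB_disj:
  assumes "v \<in> V" "k < length (ch v)" "k' < length (ch v)" "k \<noteq> k'"
  shows "LB (ch v ! k) \<inter> LB (ch v ! k') = {}"
proof (rule ccontr)
  assume "LB (ch v ! k) \<inter> LB (ch v ! k') \<noteq> {}"
  then obtain l where "(ch v ! k, l) \<in> E\<^sup>*" "(ch v ! k', l) \<in> E\<^sup>*"
    by (auto simp: leaves_below_def)
  have ne: "ch v ! k \<noteq> ch v ! k'" using dist[OF assms(1)] assms by (simp add: nth_eq_iff_index_eq)
  have gen: "False" if "(c, c') \<in> E\<^sup>*" "c \<noteq> c'" "c \<in> set (ch v)" "c' \<in> set (ch v)" for c c'
  proof -
    have "(c, c') \<in> E\<^sup>+" using that by (meson rtranclD)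
    then obtain y where "(c, y) \<in> E\<^sup>*" "(y, c') \<in> E" by (meson tranclD2)
    then have "y \<in> V" "c' \<in> set (ch y)" by (simp_all add: E_iff)
    then have "y = v" using par_unique[of y v c'] assms(1) that(4) by blast
    moreover have "(v, c) \<in> E" using assms(1) that by (simp add: E_iff)
    have "(c, v) \<in> E\<^sup>*" using \<open>(c, y) \<in> E\<^sup>*\<close> \<open>y = v\<close> by simp
    have "(v, v) \<in> E\<^sup>+" by (rule rtrancl_into_trancl2[OF \<open>(v, c) \<in> E\<close> \<open>(c, v) \<in> E\<^sup>*\<close>])
    then show False using acyc' by blast
  qed
  have c1: "ch v ! k \<in> set (ch v)" "ch v ! k' \<in> set (ch v)" using assms by simp_all
  from comparable[OF \<open>(ch v ! k, l) \<in> E\<^sup>*\<close> \<open>(ch v ! k', l) \<in> E\<^sup>*\<close>]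
  show False using gen[OF _ ne c1] gen[OF _ ne[symmetric] c1(2) c1(1)] by blast
qed

lemma card_LB:
  assumes "v \<in> V" "ch v \<noteq> []"
  shows "card (LB v) = (\<Sum>k<length (ch v). card (LB (ch v ! k)))"
  unfolding LB_sit[OF assms]
  apply (rule card_UN_disjoint)
  apply (simp_all add: fin_LB)
  using LB_disj[OF assms(1)] by blast

lemma LB_ne:
  assumes "w \<in> V" shows "LB w \<noteq> {}"
proof -
  have finE: "finite E"
  proof (rule finite_subset[of _ "V \<times> V"])
    show "E \<subseteq> V \<times> V"
    proof
      fix e assume "e \<in> E"
      then obtain a b where "e = (a, b)" "a \<in> V" "b \<in> set (ch a)" by (auto simp: tree_edges_def)
      then show "e \<in> V \<times> V" using chV by blast
    qed
  qed (use finV in simp)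
  have "acyclic E" using acyc' by (simp add: acyclic_def)
  then have wf: "wf (E\<inverse>)" using finE by (simp add: finite_acyclic_wf_converse)
  obtain x where x: "x \<in> {x. (w, x) \<in> E\<^sup>*}" "\<forall>y. (y, x) \<in> E\<inverse> \<longrightarrow> y \<notin> {x. (w, x) \<in> E\<^sup>*}"
    using wfE_min[OF wf, of w "{x. (w, x) \<in> E\<^sup>*}"] by blast
  have xV: "x \<in> V" using rt_V x(1) assms by auto
  have "ch x = []"
  proof (rule ccontr)
    assume "ch x \<noteq> []"
    then obtain y where "y \<in> set (ch x)" by (meson list.set_sel(1))
    then have "(x, y) \<in> E" using xV by (simp add: E_iff)
    then show False using x by (meson converse_iff mem_Collect_eq rtrancl.rtrancl_into_rtrancl)
  qed
  then have "x \<in> LB w" using x(1) xV by (auto simp: leaves_below_def leaves_def)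
  then show ?thesis by auto
qed

end



context etree begin

definition Ext :: "'v \<Rightarrow> nat list set \<Rightarrow> nat list set" where
  "Ext s P = P \<union> {p @ [k] | p k. p \<in> P \<and> k < length (ch (nodeAt ch s p))}"

context
  fixes s P assumes vs: "valid_subtree V ch s P"
begin

lemma vs_nil: "[] \<in> P" using vs by (simp add: valid_subtree_def)

lemma vs_sit: "p \<in> P \<Longrightarrow> nodeAt ch s p \<in> V \<and> ch (nodeAt ch s p) \<noteq> []"
  using vs by (simp add: valid_subtree_def is_situation_def)

lemma vs_snoc: "p @ [k] \<in> P \<Longrightarrow> p \<in> P \<and> k < length (ch (nodeAt ch s p))"
  using vs by (simp add: valid_subtree_def)

lemma sV: "s \<in> V" using vs_sit[OF vs_nil] by simp

lemma ext_cases: "q \<in> Ext s P \<Longrightarrow> q = [] \<or> (\<exists>p k. q = p @ [k] \<and> p \<in> P \<and> k < length (ch (nodeAt ch s p)))"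
proof -
  assume "q \<in> Ext s P"
  then have h: "q \<in> P \<or> (\<exists>p k. q = p @ [k] \<and> p \<in> P \<and> k < length (ch (nodeAt ch s p)))"
    unfolding Ext_def by blast
  show ?thesis
  proof (cases q rule: rev_exhaust)
    case Nil then show ?thesis by blast
  next
    case (snoc p k)
    show ?thesis
    proof (cases "q \<in> P")
      case True
      then have "p \<in> P \<and> k < length (ch (nodeAt ch s p))" using vs_snoc snoc by blast
      then show ?thesis using snoc by blast
    next
      case False then show ?thesis using h by blast
    qed
  qed
qed

lemma ext_snoc: "q @ [k] \<in> Ext s P \<Longrightarrow> q \<in> P \<and> k < length (ch (nodeAt ch s q))"
proof -
  assume "q @ [k] \<in> Ext s P"
  from ext_cases[OF this] obtain p k' where "q @ [k] = p @ [k']" "p \<in> P" "k' < length (ch (nodeAt ch s p))"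
    by blast
  then show ?thesis by simp
qed

lemma P_ext: "P \<subseteq> Ext s P" by (auto simp: Ext_def)

lemma ext_reach: "q \<in> Ext s P \<Longrightarrow> (s, nodeAt ch s q) \<in> E\<^sup>*"
proof (induction q rule: rev_induct)
  case Nil then show ?case by simp
next
  case (snoc k q)
  then have q: "q \<in> P" "k < length (ch (nodeAt ch s q))" using ext_snoc by auto
  then have "(s, nodeAt ch s q) \<in> E\<^sup>*" using snoc.IH P_ext by auto
  moreover have "(nodeAt ch s q, nodeAt ch s (q @ [k])) \<in> E"
    using q vs_sit[OF q(1)] by (simp add: nodeAt_snoc E_iff)
  ultimately show ?case by simp
qed

lemma ext_V: "q \<in> Ext s P \<Longrightarrow> nodeAt ch s q \<in> V"
  using rt_V[OF ext_reach sV] by blast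

lemma ext_reach_plus: "q \<in> Ext s P \<Longrightarrow> q \<noteq> [] \<Longrightarrow> (s, nodeAt ch s q) \<in> E\<^sup>+"
proof -
  assume a: "q \<in> Ext s P" "q \<noteq> []"
  then obtain p k where q: "q = p @ [k]" "p \<in> P" "k < length (ch (nodeAt ch s p))"
    using ext_cases by blast
  then have "(s, nodeAt ch s p) \<in> E\<^sup>*" using ext_reach P_ext by auto
  moreover have "(nodeAt ch s p, nodeAt ch s q) \<in> E"
    using q vs_sit[OF q(2)] by (simp add: nodeAt_snoc E_iff)
  ultimately show ?thesis by simp
qed

lemma ext_inj: "p \<in> Ext s P \<Longrightarrow> q \<in> Ext s P \<Longrightarrow> nodeAt ch s p = nodeAt ch s q \<Longrightarrow> p = q"
proof (induction p arbitrary: q rule: rev_induct)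
  case Nil
  show ?case
  proof (rule ccontr)
    assume "[] \<noteq> q"
    then have "(s, nodeAt ch s q) \<in> E\<^sup>+" using ext_reach_plus[OF Nil.prems(2)] by blast
    moreover have "nodeAt ch s q = s" using Nil.prems by simp
    ultimately show False using acyc' by metis
  qed
next
  case (snoc k p)
  note pr = snoc.prems
  note IH = snoc.IH
  have p: "p \<in> P" "k < length (ch (nodeAt ch s p))" using ext_snoc pr(1) by auto
  show ?case
  proof (cases q rule: rev_exhaust)
    case Nil
    have "(s, nodeAt ch s (p @ [k])) \<in> E\<^sup>+" using ext_reach_plus[OF pr(1)] by blast
    moreover have "nodeAt ch s (p @ [k]) = s" using pr(3) Nil by simp
    ultimately show ?thesis using acyc' by metis
  next
    case (snoc q' k')
    note qq = snoc
    have q: "q' \<in> P" "k' < length (ch (nodeAt ch s q'))" using ext_snoc pr(2) qq by auto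
    define x where "x = nodeAt ch s (p @ [k])"
    have x1: "x \<in> set (ch (nodeAt ch s p))" using p by (simp add: x_def nodeAt_snoc)
    have x3: "x = ch (nodeAt ch s q') ! k'" using pr(3) qq by (simp add: x_def nodeAt_snoc)
    have x2: "x \<in> set (ch (nodeAt ch s q'))" using q x3 by simp
    have eq: "nodeAt ch s p = nodeAt ch s q'"
      using par_unique[OF _ _ x1 x2] vs_sit[OF p(1)] vs_sit[OF q(1)] by blast
    have x4: "x = ch (nodeAt ch s p) ! k" by (simp add: x_def nodeAt_snoc)
    have "distinct (ch (nodeAt ch s p))" using dist vs_sit[OF p(1)] by blast
    then have "k = k'" using x3 x4 eq p q by (simp add: nth_eq_iff_index_eq)
    moreover have "p = q'" using IH[of q'] eq p q P_ext by auto
    ultimately show ?thesis using qq by simp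
  qed
qed

lemma fin_P: "finite P"
proof -
  have inj: "inj_on (nodeAt ch s) P"
  proof (rule inj_onI)
    fix x y assume "x \<in> P" "y \<in> P" "nodeAt ch s x = nodeAt ch s y"
    then show "x = y" using ext_inj P_ext by blast
  qed
  have "nodeAt ch s ` P \<subseteq> V" using vs_sit by auto
  then have "finite (nodeAt ch s ` P)" using finite_subset[OF _ finV] by blast
  then show ?thesis by (rule finite_imageD[OF _ inj])
qed

end
end



locale rs = etree V r ch for V :: "'v set" and r and ch +
  fixes st :: "'v \<Rightarrow> 's" and u :: 's and T :: "'v \<Rightarrow> nat list set"
  assumes stg: "staged_tree V r ch st"
    and sqf: "square_free V ch st"
    and uL: "u \<in> stage_labels V ch st"
    and cs: "cond_saturated V ch st u T"
begin

abbreviation "U \<equiv> stage V ch st u"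

lemma U_iff: "s \<in> U \<longleftrightarrow> s \<in> V \<and> ch s \<noteq> [] \<and> st s = u"
  by (simp add: stage_def is_situation_def)

lemma U_ne: "U \<noteq> {}"
proof -
  obtain v where "is_situation V ch v" "u = st v" using uL unfolding stage_labels_def by blast
  then have "v \<in> U" by (simp add: stage_def)
  then show ?thesis by blast
qed

definition s0 where "s0 = (SOME s. s \<in> U)"
lemma s0U: "s0 \<in> U" using U_ne by (simp add: s0_def some_in_eq)

definition P where "P = T s0"
definition d where "d p = length (ch (nodeAt ch s0 p))"
definition J where "J p = st (nodeAt ch s0 p)"

lemma cs_all: "(\<forall>s\<in>U. valid_subtree V ch s (T s)) \<and>
    (\<forall>s\<in>U. \<forall>s'\<in>U. T s = T s' \<and> (\<forall>p\<in>T s. st (nodeAt ch s p) = st (nodeAt ch s' p))) \<and>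
    (\<forall>s\<in>U. \<forall>p\<in>T s. \<forall>p'\<in>T s. p \<noteq> p' \<longrightarrow> st (nodeAt ch s p) \<noteq> st (nodeAt ch s p')) \<and>
    (\<forall>s\<in>U. \<forall>p\<in>T s. p \<noteq> [] \<longrightarrow>
        (\<forall>w. is_situation V ch w \<and> st w = st (nodeAt ch s p) \<longrightarrow>
           (\<exists>s'\<in>U. \<exists>p'\<in>T s'. w = nodeAt ch s' p')))"
  using cs unfolding cond_saturated_def by assumption

lemmas cs1 = cs_all[THEN conjunct1]
  and cs2 = cs_all[THEN conjunct2, THEN conjunct1]
  and cs3 = cs_all[THEN conjunct2, THEN conjunct2, THEN conjunct1]
  and cs4 = cs_all[THEN conjunct2, THEN conjunct2, THEN conjunct2]

lemma vsU: "s \<in> U \<Longrightarrow> valid_subtree V ch s (T s)"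
  using cs1 by (rule bspec)

lemma cs2': "s \<in> U \<Longrightarrow> s' \<in> U \<Longrightarrow> T s = T s' \<and> (\<forall>p\<in>T s. st (nodeAt ch s p) = st (nodeAt ch s' p))"
proof -
  assume a: "s \<in> U" "s' \<in> U"
  show ?thesis using bspec[OF bspec[OF cs2 a(1)] a(2)] .
qed

lemma TU: "s \<in> U \<Longrightarrow> T s = P"
  unfolding P_def using cs2'[OF _ s0U] by (rule conjunct1)

lemma vs: "s \<in> U \<Longrightarrow> valid_subtree V ch s P"
proof -
  assume a: "s \<in> U"
  have "valid_subtree V ch s (T s)" using vsU[OF a] .
  then show ?thesis unfolding TU[OF a] .
qed

lemma stP: "s \<in> U \<Longrightarrow> p \<in> P \<Longrightarrow> st (nodeAt ch s p) = J p"
proof -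
  assume a: "s \<in> U" "p \<in> P"
  have "p \<in> T s" using a TU by simp
  have "\<forall>p\<in>T s. st (nodeAt ch s p) = st (nodeAt ch s0 p)" using cs2'[OF a(1) s0U] by (rule conjunct2)
  then have "st (nodeAt ch s p) = st (nodeAt ch s0 p)" using \<open>p \<in> T s\<close> by (rule bspec)
  then show ?thesis unfolding J_def .
qed

lemma same_len: "is_situation V ch v \<Longrightarrow> is_situation V ch w \<Longrightarrow> st v = st w \<Longrightarrow> length (ch v) = length (ch w)"
  using stg unfolding staged_tree_def by blast

lemma dP: "s \<in> U \<Longrightarrow> p \<in> P \<Longrightarrow> length (ch (nodeAt ch s p)) = d p"
proof -
  assume a: "s \<in> U" "p \<in> P"
  have "is_situation V ch (nodeAt ch s p)" using vs_sit[OF vs[OF a(1)] a(2)] by (simp add: is_situation_def)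
  moreover have "is_situation V ch (nodeAt ch s0 p)" using vs_sit[OF vs[OF s0U] a(2)] by (simp add: is_situation_def)
  moreover have "st (nodeAt ch s p) = st (nodeAt ch s0 p)" using stP[OF a] stP[OF s0U a(2)] by simp
  ultimately show ?thesis unfolding d_def by (rule same_len)
qed

lemma norep: "p \<in> P \<Longrightarrow> p' \<in> P \<Longrightarrow> J p = J p' \<Longrightarrow> p = p'"
proof (rule ccontr)
  assume a: "p \<in> P" "p' \<in> P" "J p = J p'" "p \<noteq> p'"
  have b: "p \<in> T s0" "p' \<in> T s0" using a by (simp_all add: P_def)
  have "\<forall>p\<in>T s0. \<forall>p'\<in>T s0. p \<noteq> p' \<longrightarrow> st (nodeAt ch s0 p) \<noteq> st (nodeAt ch s0 p')"
    using cs3 s0U by (rule bspec)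
  then have "st (nodeAt ch s0 p) \<noteq> st (nodeAt ch s0 p')" using b a(4) by blast
  then show False using a(3) unfolding J_def by simp
qed

lemma J_nil: "J [] = u" using s0U by (simp add: J_def U_iff)

lemma sf: "s \<in> U \<Longrightarrow> s' \<in> U \<Longrightarrow> (s, s') \<in> E\<^sup>* \<Longrightarrow> s = s'"
proof (rule ccontr)
  assume a: "s \<in> U" "s' \<in> U" "(s, s') \<in> E\<^sup>*" "s \<noteq> s'"
  then have "(s, s') \<in> E\<^sup>+" by (simp add: rtrancl_eq_or_trancl)
  moreover have "is_situation V ch s" "is_situation V ch s'" "st s = st s'"
    using a(1,2) by (simp_all add: stage_def)
  ultimately show False using sqf unfolding square_free_def by blast
qed

lemma disjU: "s \<in> U \<Longrightarrow> s' \<in> U \<Longrightarrow> (s, x) \<in> E\<^sup>* \<Longrightarrow> (s', x) \<in> E\<^sup>* \<Longrightarrow> s = s'"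
proof -
  assume a: "s \<in> U" "s' \<in> U" "(s, x) \<in> E\<^sup>*" "(s', x) \<in> E\<^sup>*"
  from comparable[OF a(3) a(4)] show "s = s'" using sf[OF a(1) a(2)] sf[OF a(2) a(1)] by auto
qed

lemma sat4: "is_situation V ch w \<Longrightarrow> p \<in> P \<Longrightarrow> p \<noteq> [] \<Longrightarrow> st w = J p \<Longrightarrow> \<exists>s\<in>U. w = nodeAt ch s p"
proof -
  assume a: "is_situation V ch w" "p \<in> P" "p \<noteq> []" "st w = J p"
  have "p \<in> T s0" using a by (simp add: P_def)
  then have "\<forall>w. is_situation V ch w \<and> st w = st (nodeAt ch s0 p) \<longrightarrow>
           (\<exists>s'\<in>U. \<exists>p'\<in>T s'. w = nodeAt ch s' p')" using cs4 s0U a(3) by blast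
  then obtain s' p' where s'0: "s' \<in> U" "p' \<in> T s'" "w = nodeAt ch s' p'"
    using a(1,4) unfolding J_def by blast
  then have s': "s' \<in> U" "p' \<in> P" "w = nodeAt ch s' p'" using TU by auto
  then have "J p' = J p" using stP a by auto
  then have "p' = p" using norep s' a by auto
  then show ?thesis using s' by auto
qed

definition ExtP where "ExtP = P \<union> {p @ [k] | p k. p \<in> P \<and> k < d p}"

lemma ExtP_eq: "s \<in> U \<Longrightarrow> Ext s P = ExtP"
proof -
  assume a: "s \<in> U"
  have "{p @ [k] |p k. p \<in> P \<and> k < length (ch (nodeAt ch s p))} = {p @ [k] |p k. p \<in> P \<and> k < d p}"
  proof (rule Collect_cong)
    fix x
    show "(\<exists>p k. x = p @ [k] \<and> p \<in> P \<and> k < length (ch (nodeAt ch s p))) = (\<exists>p k. x = p @ [k] \<and> p \<in> P \<and> k < d p)"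
      using dP[OF a] by metis
  qed
  then show ?thesis unfolding Ext_def ExtP_def by simp
qed

lemma stage_at: "p \<in> P \<Longrightarrow> stage V ch st (J p) = (\<lambda>s. nodeAt ch s p) ` U"
proof (cases "p = []")
  case True then show ?thesis by (simp add: J_nil)
next
  case False
  assume p: "p \<in> P"
  show ?thesis
  proof
    show "stage V ch st (J p) \<subseteq> (\<lambda>s. nodeAt ch s p) ` U"
    proof
      fix w assume "w \<in> stage V ch st (J p)"
      then have w: "is_situation V ch w" "st w = J p" by (simp_all add: stage_def)
      obtain s where "s \<in> U" "w = nodeAt ch s p" using sat4[OF w(1) p False w(2)] by blast
      then show "w \<in> (\<lambda>s. nodeAt ch s p) ` U" by blast
    qed
    show "(\<lambda>s. nodeAt ch s p) ` U \<subseteq> stage V ch st (J p)"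
    proof
      fix w assume "w \<in> (\<lambda>s. nodeAt ch s p) ` U"
      then obtain s where s: "s \<in> U" "w = nodeAt ch s p" by blast
      have "w \<in> V \<and> ch w \<noteq> []" using vs_sit[OF vs[OF s(1)] p] s(2) by simp
      moreover have "st w = J p" using stP[OF s(1) p] s(2) by simp
      ultimately show "w \<in> stage V ch st (J p)" by (simp add: stage_def is_situation_def)
    qed
  qed
qed

lemma inj_at: "q \<in> ExtP \<Longrightarrow> inj_on (\<lambda>s. nodeAt ch s q) U"
proof (rule inj_onI)
  fix s s' assume a: "q \<in> ExtP" "s \<in> U" "s' \<in> U" "nodeAt ch s q = nodeAt ch s' q"
  have h1: "(s, nodeAt ch s q) \<in> E\<^sup>*" using ext_reach[OF vs[OF a(2)]] ExtP_eq[OF a(2)] a(1) by simp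
  have h2: "(s', nodeAt ch s' q) \<in> E\<^sup>*" using ext_reach[OF vs[OF a(3)]] ExtP_eq[OF a(3)] a(1) by simp
  then have "(s', nodeAt ch s q) \<in> E\<^sup>*" using a(4) by simp
  then show "s = s'" using disjU[OF a(2) a(3) h1] by blast
qed

definition R where "R = {nodeAt ch s p | s p. s \<in> U \<and> p \<in> P \<and> p \<noteq> []}"

lemma R_eq: "{nodeAt ch s p | s p. s \<in> U \<and> p \<in> T s \<and> p \<noteq> []} = R"
  unfolding R_def using TU by auto

definition SL where "SL = {p @ [k] | p k. p \<in> P \<and> k < d p \<and> p @ [k] \<notin> P}"

lemma SL_eq: "s \<in> U \<Longrightarrow> subleaf_pos ch s (T s) = SL"
proof -
  assume a: "s \<in> U"
  have "{p @ [k] |p k. p \<in> P \<and> k < length (ch (nodeAt ch s p)) \<and> p @ [k] \<notin> P} = SL"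
    unfolding SL_def
  proof (rule Collect_cong)
    fix x
    show "(\<exists>p k. x = p @ [k] \<and> p \<in> P \<and> k < length (ch (nodeAt ch s p)) \<and> p @ [k] \<notin> P) =
      (\<exists>p k. x = p @ [k] \<and> p \<in> P \<and> k < d p \<and> p @ [k] \<notin> P)"
      using dP[OF a] by metis
  qed
  then show ?thesis unfolding subleaf_pos_def TU[OF a] .
qed

lemma finP: "finite P" using fin_P[OF vs[OF s0U]] .

lemma nilP: "[] \<in> P" using vs_nil[OF vs[OF s0U]] .

lemma finSL: "finite SL"
proof -
  have "SL \<subseteq> (\<lambda>(p, k). p @ [k]) ` (SIGMA p:P. {..<d p})" unfolding SL_def by auto
  moreover have "finite ((\<lambda>(p, k). p @ [k]) ` (SIGMA p:P. {..<d p}))" using finP by simp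
  ultimately show ?thesis by (rule finite_subset)
qed

lemma d_pos: "p \<in> P \<Longrightarrow> d p > 0"
  using vs_sit[OF vs[OF s0U]] by (simp add: d_def)

lemma SL_ne: "SL \<noteq> {}"
proof -
  have "Max (length ` P) \<in> length ` P" using finP nilP by (intro Max_in) auto
  then obtain p where p: "p \<in> P" "length p = Max (length ` P)" by auto
  have "p @ [0] \<notin> P"
  proof
    assume "p @ [0] \<in> P"
    then have "length (p @ [0]) \<in> length ` P" by (rule imageI)
    then have "length (p @ [0]) \<le> Max (length ` P)" using Max_ge[OF finite_imageI[OF finP]] by blast
    then show False using p by simp
  qed
  then have "p @ [0] \<in> SL" using p d_pos unfolding SL_def by blast
  then show ?thesis by auto
qed

lemma SL_ExtP: "SL \<subseteq> ExtP" unfolding SL_def ExtP_def by auto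

lemma snocP: "p @ [k] \<in> P \<Longrightarrow> p \<in> P \<and> k < d p"
  using vs_snoc[OF vs[OF s0U]] by (simp add: d_def)

lemma R_sit: "x \<in> R \<Longrightarrow> x \<in> V \<and> ch x \<noteq> [] \<and> st x \<in> J ` (P - {[]})"
proof -
  assume "x \<in> R"
  then obtain s p where sp: "s \<in> U" "p \<in> P" "p \<noteq> []" "x = nodeAt ch s p" unfolding R_def by blast
  have "x \<in> V \<and> ch x \<noteq> []" using vs_sit[OF vs[OF sp(1)] sp(2)] sp(4) by simp
  moreover have "st x = J p" using stP[OF sp(1) sp(2)] sp(4) by simp
  moreover have "J p \<in> J ` (P - {[]})" using sp(2,3) by blast
  ultimately show ?thesis by simp
qed

lemma notR: "s \<in> U \<Longrightarrow> q \<in> ExtP \<Longrightarrow> (q \<notin> P \<or> q = []) \<Longrightarrow> nodeAt ch s q \<notin> R"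
proof
  assume a: "s \<in> U" "q \<in> ExtP" "q \<notin> P \<or> q = []" "nodeAt ch s q \<in> R"
  then obtain s' p' where b: "s' \<in> U" "p' \<in> P" "p' \<noteq> []" "nodeAt ch s q = nodeAt ch s' p'"
    unfolding R_def by blast
  have qE: "q \<in> Ext s P" using ExtP_eq[OF a(1)] a(2) by simp
  have h1: "(s, nodeAt ch s q) \<in> E\<^sup>*" using ext_reach[OF vs[OF a(1)] qE] .
  have "p' \<in> Ext s' P" using P_ext[OF vs[OF b(1)]] b(2) by blast
  then have "(s', nodeAt ch s' p') \<in> E\<^sup>*" using ext_reach[OF vs[OF b(1)]] by blast
  then have h2: "(s', nodeAt ch s q) \<in> E\<^sup>*" using b(4) by simp
  have "s = s'" using disjU[OF a(1) b(1) h1 h2] .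
  have pE: "p' \<in> Ext s P" using P_ext[OF vs[OF a(1)]] b(2) by blast
  have "nodeAt ch s q = nodeAt ch s p'" using b(4) \<open>s = s'\<close> by simp
  then have "q = p'" using ext_inj[OF vs[OF a(1)] qE pE] by blast
  then show False using a(3) b(2,3) by blast
qed

lemma U_notR: "s \<in> U \<Longrightarrow> s \<notin> R"
proof -
  assume "s \<in> U"
  moreover have "[] \<in> ExtP" using nilP by (simp add: ExtP_def)
  ultimately have "nodeAt ch s [] \<notin> R" using notR by blast
  then show "s \<notin> R" by simp
qed

lemma child_notR:
  assumes "v \<in> V" "v \<notin> U" "v \<notin> R" "c \<in> set (ch v)" shows "c \<notin> R"
proof
  assume "c \<in> R"
  then obtain s p where sp: "s \<in> U" "p \<in> P" "p \<noteq> []" "c = nodeAt ch s p" unfolding R_def by blast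
  then obtain p' k where p': "p = p' @ [k]" by (metis rev_exhaust)
  then have p'P: "p' \<in> P" "k < d p'" using snocP sp(2) by auto
  then have "c \<in> set (ch (nodeAt ch s p'))" using sp(1,4) p' dP[OF sp(1) p'P(1)] by (simp add: nodeAt_snoc)
  moreover have "nodeAt ch s p' \<in> V" using vs_sit[OF vs[OF sp(1)] p'P(1)] by simp
  ultimately have "v = nodeAt ch s p'" using par_unique[OF assms(1) _ assms(4)] by blast
  show False
  proof (cases "p' = []")
    case True then show False using \<open>v = nodeAt ch s p'\<close> sp(1) assms(2) by simp
  next
    case False
    then have "v \<in> R" using \<open>v = nodeAt ch s p'\<close> sp(1) p'P(1) unfolding R_def by blast
    then show False using assms(3) by blast
  qed
qed

end



context rs begin

definition qs where "qs = sorted_list_of_set SL"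
definition V' where "V' = V - R"
definition ch' where "ch' v = (if v \<in> U then map (nodeAt ch v) qs else ch v)"

abbreviation "E' \<equiv> tree_edges V' ch'"
abbreviation "LB' \<equiv> leaves_below V' ch'"

lemma resize_V_eq: "resize_V V ch st u T = V'"
  unfolding resize_V_def V'_def R_eq ..

lemma resize_ch_eq: "resize_ch V ch st u T = ch'"
  unfolding resize_ch_def ch'_def qs_def using SL_eq by (auto intro!: ext)

lemma qs: "distinct qs" "set qs = SL" "length qs = card SL"
  using finSL by (simp_all add: qs_def)

lemma qs_ne: "qs \<noteq> []" using qs SL_ne by auto

lemma ch'_U: "v \<in> U \<Longrightarrow> ch' v \<noteq> []" using qs_ne by (simp add: ch'_def)

lemma ch'_nth: "v \<in> U \<Longrightarrow> k < length qs \<Longrightarrow> ch' v ! k = nodeAt ch v (qs ! k)"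
  by (simp add: ch'_def)

lemma leaves_eq: "leaves V' ch' = leaves V ch"
proof
  show "leaves V' ch' \<subseteq> leaves V ch"
    using ch'_U by (auto simp: leaves_def V'_def ch'_def split: if_splits)
  show "leaves V ch \<subseteq> leaves V' ch'"
  proof
    fix l assume "l \<in> leaves V ch"
    then have l: "l \<in> V" "ch l = []" by (auto simp: leaves_def)
    then have "l \<notin> R" "l \<notin> U" using R_sit U_iff by auto
    then show "l \<in> leaves V' ch'" using l by (simp add: leaves_def V'_def ch'_def)
  qed
qed

lemma E'_sub: "(a, b) \<in> E' \<Longrightarrow> (a, b) \<in> E\<^sup>*"
proof -
  assume "(a, b) \<in> E'"
  then have ab: "a \<in> V'" "b \<in> set (ch' a)" by (auto simp: tree_edges_def)
  show ?thesis
  proof (cases "a \<in> U")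
    case True
    then obtain q where "q \<in> SL" "b = nodeAt ch a q" using ab qs by (auto simp: ch'_def)
    then show ?thesis using ext_reach[OF vs[OF True]] ExtP_eq[OF True] SL_ExtP by auto
  next
    case False
    then show ?thesis using ab by (auto simp: ch'_def V'_def E_iff)
  qed
qed

lemma E'_rt_sub: "(a, b) \<in> E'\<^sup>* \<Longrightarrow> (a, b) \<in> E\<^sup>*"
  by (induction rule: rtrancl_induct) (auto dest: E'_sub)

lemma key_reach:
  assumes "(x, l) \<in> E\<^sup>*" "l \<in> leaves V ch"
  shows "(x \<in> V' \<longrightarrow> (x, l) \<in> E'\<^sup>*) \<and> (\<forall>s\<in>U. \<forall>p\<in>P. x = nodeAt ch s p \<longrightarrow> (s, l) \<in> E'\<^sup>*)"
  using assms(1)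
proof (induction rule: converse_rtrancl_induct)
  case base
  have "l \<in> V" "ch l = []" using assms(2) by (auto simp: leaves_def)
  then show ?case using vs_sit[OF vs] by auto
next
  case (step x y)
  have xy: "x \<in> V" "y \<in> set (ch x)" using step(1) by (auto simp: E_iff)
  have second: "(s, l) \<in> E'\<^sup>*" if sp: "s \<in> U" "p \<in> P" "x = nodeAt ch s p" for s p
  proof -
    obtain k where k: "k < length (ch x)" "y = ch x ! k" using xy by (auto simp: in_set_conv_nth)
    have kd: "k < d p" using k dP sp by auto
    have y: "y = nodeAt ch s (p @ [k])" using k sp by (simp add: nodeAt_snoc)
    show ?thesis
    proof (cases "p @ [k] \<in> P")
      case True
      then show ?thesis using step.IH sp y by blast
    next
      case False
      then have inSL: "p @ [k] \<in> SL" using sp kd unfolding SL_def by blast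
      then have "p @ [k] \<in> ExtP" using SL_ExtP by auto
      then have "y \<notin> R" "y \<in> V" using notR[OF sp(1)] False y ext_V[OF vs[OF sp(1)]] ExtP_eq[OF sp(1)]
        by auto
      then have yV': "y \<in> V'" by (simp add: V'_def)
      have "s \<in> V'" using U_notR sp U_iff by (simp add: V'_def)
      moreover have "y \<in> set (ch' s)" using sp inSL qs y by (simp add: ch'_def)
      ultimately have "(s, y) \<in> E'" by (simp add: tree_edges_def)
      moreover have "(y, l) \<in> E'\<^sup>*" using step.IH yV' by blast
      ultimately show ?thesis by simp
    qed
  qed
  have first: "(x, l) \<in> E'\<^sup>*" if "x \<in> V'"
  proof (cases "x \<in> U")
    case True
    then show ?thesis using second[of x "[]"] nilP by simp
  next
    case False
    have "y \<notin> R" using child_notR xy False that by (simp add: V'_def)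
    then have "y \<in> V'" using chV xy by (auto simp: V'_def)
    moreover have "(x, y) \<in> E'" using that xy False by (simp add: tree_edges_def ch'_def)
    moreover have "(y, l) \<in> E'\<^sup>*" using step.IH \<open>y \<in> V'\<close> by blast
    ultimately show ?thesis by (meson converse_rtrancl_into_rtrancl)
  qed
  show ?case using first second by blast
qed

lemma LB'_eq: "w \<in> V' \<Longrightarrow> LB' w = LB w"
proof
  show "LB' w \<subseteq> LB w" using E'_rt_sub leaves_eq by (auto simp: leaves_below_def)
  show "w \<in> V' \<Longrightarrow> LB w \<subseteq> LB' w" using key_reach leaves_eq by (auto simp: leaves_below_def)
qed

lemma sit'_iff: "is_situation V' ch' v \<longleftrightarrow> is_situation V ch v \<and> v \<notin> R"
  using ch'_U U_iff by (auto simp: is_situation_def V'_def ch'_def)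

end



context
  fixes P :: "nat list set" and d :: "nat list \<Rightarrow> nat"
  assumes finP: "finite P" and nilP: "[] \<in> P"
    and snocP: "\<And>p k. p @ [k] \<in> P \<Longrightarrow> p \<in> P \<and> k < d p"
begin

definition "Ch = {p @ [k] | p k. p \<in> P \<and> k < d p}"
definition "SLt = {p @ [k] | p k. p \<in> P \<and> k < d p \<and> p @ [k] \<notin> P}"

lemma Ch_img: "Ch = (\<lambda>(p, k). p @ [k]) ` (SIGMA p:P. {..<d p})"
  unfolding Ch_def by auto

lemma Ch_inj: "inj_on (\<lambda>(p, k). p @ [k]) (SIGMA p:P. {..<d p})"
  by (auto simp: inj_on_def)

lemma fin_Sig: "finite (SIGMA p:P. {..<d p})" using finP by auto

lemma Ch_split: "Ch = (P - {[]}) \<union> SLt"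
proof
  show "Ch \<subseteq> (P - {[]}) \<union> SLt" unfolding Ch_def SLt_def by auto
  show "(P - {[]}) \<union> SLt \<subseteq> Ch"
  proof
    fix q assume "q \<in> (P - {[]}) \<union> SLt"
    then show "q \<in> Ch"
    proof
      assume "q \<in> P - {[]}"
      then obtain p k where "q = p @ [k]" by (metis DiffE rev_exhaust singletonI)
      then show ?thesis using snocP \<open>q \<in> P - {[]}\<close> unfolding Ch_def by auto
    qed (auto simp: Ch_def SLt_def)
  qed
qed

lemma finSLt: "finite SLt"
proof -
  have "SLt \<subseteq> Ch" unfolding SLt_def Ch_def by auto
  moreover have "finite Ch" unfolding Ch_img by (rule finite_imageI[OF fin_Sig])
  ultimately show ?thesis using finite_subset by blast
qed

lemma disj: "(P - {[]}) \<inter> SLt = {}" unfolding SLt_def by auto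

lemma tele_core_prod:
  fixes f :: "nat list \<Rightarrow> 'a::comm_monoid_mult"
  shows "(\<Prod>p\<in>P. \<Prod>k<d p. f (p @ [k])) = (\<Prod>q\<in>P - {[]}. f q) * (\<Prod>q\<in>SLt. f q)"
proof -
  have "(\<Prod>p\<in>P. \<Prod>k<d p. f (p @ [k])) = (\<Prod>(p, k)\<in>(SIGMA p:P. {..<d p}). f (p @ [k]))"
    using finP by (simp add: prod.Sigma)
  also have "\<dots> = (\<Prod>q\<in>Ch. f q)"
    unfolding Ch_img by (subst prod.reindex[OF Ch_inj]) (simp add: case_prod_unfold)
  also have "\<dots> = (\<Prod>q\<in>P - {[]}. f q) * (\<Prod>q\<in>SLt. f q)"
    unfolding Ch_split using finP finSLt disj by (simp add: prod.union_disjoint)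
  finally show ?thesis .
qed

lemma tele_core_sum:
  fixes f :: "nat list \<Rightarrow> 'a::comm_monoid_add"
  shows "(\<Sum>p\<in>P. \<Sum>k<d p. f (p @ [k])) = (\<Sum>q\<in>P - {[]}. f q) + (\<Sum>q\<in>SLt. f q)"
proof -
  have "(\<Sum>p\<in>P. \<Sum>k<d p. f (p @ [k])) = (\<Sum>(p, k)\<in>(SIGMA p:P. {..<d p}). f (p @ [k]))"
    using finP by (simp add: sum.Sigma)
  also have "\<dots> = (\<Sum>q\<in>Ch. f q)"
    unfolding Ch_img by (subst sum.reindex[OF Ch_inj]) (simp add: case_prod_unfold)
  also have "\<dots> = (\<Sum>q\<in>P - {[]}. f q) + (\<Sum>q\<in>SLt. f q)"
    unfolding Ch_split using finP finSLt disj by (simp add: sum.union_disjoint)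
  finally show ?thesis .
qed

lemma tele_sum:
  fixes h :: "nat list \<Rightarrow> 'a::ab_group_add"
  assumes "\<And>p. p \<in> P \<Longrightarrow> h p = (\<Sum>k<d p. h (p @ [k]))"
  shows "h [] = (\<Sum>q\<in>SLt. h q)"
proof -
  have "(\<Sum>p\<in>P. h p) = (\<Sum>p\<in>P. \<Sum>k<d p. h (p @ [k]))" using assms by simp
  also have "\<dots> = (\<Sum>q\<in>P - {[]}. h q) + (\<Sum>q\<in>SLt. h q)" by (rule tele_core_sum)
  finally have "(\<Sum>p\<in>P. h p) = (\<Sum>q\<in>P - {[]}. h q) + (\<Sum>q\<in>SLt. h q)" .
  moreover have "(\<Sum>p\<in>P. h p) = h [] + (\<Sum>q\<in>P - {[]}. h q)"
    using finP nilP by (simp add: sum.remove)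
  ultimately show ?thesis by (simp add: add.commute)
qed

lemma tele_prod:
  fixes g :: "nat list \<Rightarrow> 'a::field"
  assumes "\<And>p. p \<in> P \<Longrightarrow> g p \<noteq> 0"
  shows "(\<Prod>p\<in>P. (\<Prod>k<d p. g (p @ [k])) / g p) = (\<Prod>q\<in>SLt. g q) / g []"
proof -
  have nz: "(\<Prod>q\<in>P - {[]}. g q) \<noteq> 0" using assms finP by (simp add: prod_zero_iff)
  have "(\<Prod>p\<in>P. (\<Prod>k<d p. g (p @ [k])) / g p) = (\<Prod>p\<in>P. \<Prod>k<d p. g (p @ [k])) / (\<Prod>p\<in>P. g p)"
    by (rule prod_dividef)
  also have "\<dots> = ((\<Prod>q\<in>P - {[]}. g q) * (\<Prod>q\<in>SLt. g q)) / (g [] * (\<Prod>q\<in>P - {[]}. g q))"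
    using finP nilP by (simp only: tele_core_prod prod.remove)
  also have "\<dots> = ((\<Prod>q\<in>P - {[]}. g q) * (\<Prod>q\<in>SLt. g q)) / ((\<Prod>q\<in>P - {[]}. g q) * g [])"
    by (simp only: mult.commute[of "g []"])
  also have "\<dots> = (\<Prod>q\<in>SLt. g q) / g []" by (rule nonzero_mult_divide_mult_cancel_left[OF nz])
  finally show ?thesis .
qed

end



definition fac :: "'v set \<Rightarrow> ('v \<Rightarrow> 'v list) \<Rightarrow> ('v \<Rightarrow> 's) \<Rightarrow> ('v \<Rightarrow> nat) \<Rightarrow> real \<Rightarrow> 's \<Rightarrow> real" where
  "fac V ch st N \<alpha> j =
        (let rj = stage_arity V ch st j;
             a = alpha_jk V ch st \<alpha> j;
             n = (\<lambda>k. real (n_count V ch st N j k));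
             abar = (\<Sum>k<rj. a k);
             nbar = (\<Sum>k<rj. n k)
         in Gamma abar / Gamma (abar + nbar) * (\<Prod>k<rj. Gamma (a k + n k) / Gamma (a k)))"

lemma BDepu_fac: "BDepu V r ch st N \<alpha> = (\<Prod>j\<in>stage_labels V ch st. fac V ch st N \<alpha> j)"
  unfolding BDepu_def fac_def ..

lemma fac_eq:
  assumes "stage_arity V ch st j = m"
    and "\<And>k. k < m \<Longrightarrow> alpha_jk V ch st \<alpha> j k = a k"
    and "\<And>k. k < m \<Longrightarrow> n_count V ch st N j k = n k"
  shows "fac V ch st N \<alpha> j = Gamma (\<Sum>k<m. a k) / Gamma ((\<Sum>k<m. a k) + (\<Sum>k<m. real (n k))) *
           (\<Prod>k<m. Gamma (a k + real (n k)) / Gamma (a k))"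
proof -
  have 1: "(\<Sum>k<m. alpha_jk V ch st \<alpha> j k) = (\<Sum>k<m. a k)" using assms(2) by simp
  have 2: "(\<Sum>k<m. real (n_count V ch st N j k)) = (\<Sum>k<m. real (n k))" using assms(3) by simp
  have 3: "(\<Prod>k<m. Gamma (alpha_jk V ch st \<alpha> j k + real (n_count V ch st N j k)) / Gamma (alpha_jk V ch st \<alpha> j k))
      = (\<Prod>k<m. Gamma (a k + real (n k)) / Gamma (a k))" using assms(2,3) by simp
  show ?thesis unfolding fac_def Let_def assms(1) 1 2 3 ..
qed

context rs begin

lemma finU: "finite U"
  using finV by (rule finite_subset[rotated]) (auto simp: stage_def is_situation_def)

definition A where "A \<alpha> q = \<alpha> / real (card (leaves V ch)) * (\<Sum>s\<in>U. real (card (LB (nodeAt ch s q))))"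
definition S where "S q = (\<Union>s\<in>U. LB (nodeAt ch s q))"
definition Nn where "Nn N q = (\<Sum>l\<in>S q. N l)"
definition G where "G \<alpha> N q = Gamma (A \<alpha> q + real (Nn N q)) / Gamma (A \<alpha> q)"

lemma fin_S: "finite (S q)"
  unfolding S_def using finU fin_LB by blast

lemma P_ExtP: "P \<subseteq> ExtP" by (auto simp: ExtP_def)

lemma arity_at: "p \<in> P \<Longrightarrow> stage_arity V ch st (J p) = d p"
proof -
  assume p: "p \<in> P"
  have "(SOME v. v \<in> stage V ch st (J p)) \<in> stage V ch st (J p)"
    using U_ne stage_at[OF p] by (simp add: some_in_eq)
  then obtain s where "s \<in> U" "(SOME v. v \<in> stage V ch st (J p)) = nodeAt ch s p"
    using stage_at[OF p] by auto
  then show ?thesis unfolding stage_arity_def using dP[OF _ p] by simp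
qed

lemma alpha_at: "p \<in> P \<Longrightarrow> alpha_jk V ch st \<alpha> (J p) k = A \<alpha> (p @ [k])"
proof -
  assume p: "p \<in> P"
  have inj: "inj_on (\<lambda>s. nodeAt ch s p) U" using inj_at P_ExtP p by blast
  show ?thesis
    unfolding alpha_jk_def A_def stage_at[OF p] sum.reindex[OF inj]
    by (simp add: nodeAt_snoc)
qed

lemma S_at: "p \<in> P \<Longrightarrow> {l \<in> leaves V ch. \<exists>v\<in>stage V ch st (J p). l \<in> LB (ch v ! k)} = S (p @ [k])"
  unfolding stage_at S_def using LB_leaves by (auto simp: nodeAt_snoc)

lemma n_at: "p \<in> P \<Longrightarrow> n_count V ch st N (J p) k = Nn N (p @ [k])"
  unfolding n_count_def Nn_def using S_at by simp

lemma A_add: "p \<in> P \<Longrightarrow> (\<Sum>k<d p. A \<alpha> (p @ [k])) = A \<alpha> p"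
proof -
  assume p: "p \<in> P"
  have "(\<Sum>k<d p. A \<alpha> (p @ [k])) =
     \<alpha> / real (card (leaves V ch)) * (\<Sum>k<d p. \<Sum>s\<in>U. real (card (LB (nodeAt ch s (p @ [k])))))"
    unfolding A_def by (simp add: sum_distrib_left)
  also have "(\<Sum>k<d p. \<Sum>s\<in>U. real (card (LB (nodeAt ch s (p @ [k]))))) =
      (\<Sum>s\<in>U. \<Sum>k<d p. real (card (LB (nodeAt ch s (p @ [k])))))" by (rule sum.swap)
  also have "\<dots> = (\<Sum>s\<in>U. real (card (LB (nodeAt ch s p))))"
  proof (rule sum.cong[OF refl])
    fix s assume s: "s \<in> U"
    have sit: "nodeAt ch s p \<in> V" "ch (nodeAt ch s p) \<noteq> []" using vs_sit[OF vs[OF s] p] by auto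
    have "card (LB (nodeAt ch s p)) = (\<Sum>k<d p. card (LB (ch (nodeAt ch s p) ! k)))"
      using card_LB[OF sit] dP[OF s p] by simp
    then show "(\<Sum>k<d p. real (card (LB (nodeAt ch s (p @ [k]))))) = real (card (LB (nodeAt ch s p)))"
      by (simp add: nodeAt_snoc)
  qed
  finally show ?thesis unfolding A_def .
qed

lemma S_add: "p \<in> P \<Longrightarrow> S p = (\<Union>k<d p. S (p @ [k]))"
proof -
  assume p: "p \<in> P"
  have "S p = (\<Union>s\<in>U. \<Union>k<d p. LB (nodeAt ch s (p @ [k])))"
    unfolding S_def
  proof (rule SUP_cong[OF refl])
    fix s assume s: "s \<in> U"
    have sit: "nodeAt ch s p \<in> V" "ch (nodeAt ch s p) \<noteq> []" using vs_sit[OF vs[OF s] p] by auto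
    show "LB (nodeAt ch s p) = (\<Union>k<d p. LB (nodeAt ch s (p @ [k])))"
      using LB_sit[OF sit] dP[OF s p] by (simp add: nodeAt_snoc)
  qed
  also have "\<dots> = (\<Union>k<d p. S (p @ [k]))" unfolding S_def by blast
  finally show ?thesis .
qed

lemma S_disj:
  assumes p: "p \<in> P" and k: "k < d p" "k' < d p" "k \<noteq> k'"
  shows "S (p @ [k]) \<inter> S (p @ [k']) = {}"
proof (rule ccontr)
  assume "S (p @ [k]) \<inter> S (p @ [k']) \<noteq> {}"
  then obtain l s s' where l: "s \<in> U" "s' \<in> U" "l \<in> LB (nodeAt ch s (p @ [k]))" "l \<in> LB (nodeAt ch s' (p @ [k']))"
    unfolding S_def by blast
  have e1: "p @ [k] \<in> Ext s P" using ExtP_eq[OF l(1)] p k unfolding ExtP_def by blast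
  have e2: "p @ [k'] \<in> Ext s' P" using ExtP_eq[OF l(2)] p k unfolding ExtP_def by blast
  have r1: "(s, l) \<in> E\<^sup>*" using ext_reach[OF vs[OF l(1)] e1] l(3) unfolding leaves_below_def by auto
  have r2: "(s', l) \<in> E\<^sup>*" using ext_reach[OF vs[OF l(2)] e2] l(4) unfolding leaves_below_def by auto
  have "s = s'" using disjU[OF l(1) l(2) r1 r2] .
  have sit: "nodeAt ch s p \<in> V" using vs_sit[OF vs[OF l(1)] p] by auto
  have "LB (ch (nodeAt ch s p) ! k) \<inter> LB (ch (nodeAt ch s p) ! k') = {}"
    using LB_disj[OF sit] k dP[OF l(1) p] by simp
  then show False using l(3,4) \<open>s = s'\<close> by (simp add: nodeAt_snoc) blast
qed

lemma Nn_add: "p \<in> P \<Longrightarrow> (\<Sum>k<d p. Nn N (p @ [k])) = Nn N p"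
proof -
  assume p: "p \<in> P"
  have "Nn N p = (\<Sum>l\<in>(\<Union>k<d p. S (p @ [k])). N l)" unfolding Nn_def using S_add[OF p] by simp
  also have "\<dots> = (\<Sum>k<d p. \<Sum>l\<in>S (p @ [k]). N l)"
    by (rule sum.UNION_disjoint) (auto simp: fin_S dest: S_disj[OF p])
  finally show ?thesis unfolding Nn_def by simp
qed

lemma leaves_pos: "card (leaves V ch) > 0"
proof -
  have "LB r \<noteq> {}" using LB_ne rV by blast
  then have "leaves V ch \<noteq> {}" using LB_leaves by blast
  then show ?thesis using fin_leaves by (simp add: card_gt_0_iff)
qed

lemma A_pos: assumes "\<alpha> > 0" "q \<in> ExtP" shows "A \<alpha> q > 0"
proof -
  have "nodeAt ch s0 q \<in> V" using ext_V[OF vs[OF s0U]] ExtP_eq[OF s0U] assms(2) by simp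
  then have "card (LB (nodeAt ch s0 q)) > 0" using LB_ne fin_LB by (simp add: card_gt_0_iff)
  then have "(\<Sum>s\<in>U. real (card (LB (nodeAt ch s q)))) > 0"
    using finU s0U by (intro sum_pos2[of U s0]) auto
  then show ?thesis unfolding A_def using assms(1) leaves_pos by simp
qed

lemma G_pos: assumes "\<alpha> > 0" "q \<in> ExtP" shows "G \<alpha> N q > 0"
proof -
  have "A \<alpha> q > 0" using A_pos assms by blast
  then show ?thesis unfolding G_def by (simp add: add_pos_nonneg)
qed

lemma fac_at: assumes "p \<in> P"
  shows "fac V ch st N \<alpha> (J p) = Gamma (A \<alpha> p) / Gamma (A \<alpha> p + real (Nn N p)) * (\<Prod>k<d p. G \<alpha> N (p @ [k]))"
proof -
  have "fac V ch st N \<alpha> (J p) = Gamma (\<Sum>k<d p. A \<alpha> (p @ [k])) /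
      Gamma ((\<Sum>k<d p. A \<alpha> (p @ [k])) + (\<Sum>k<d p. real (Nn N (p @ [k])))) *
      (\<Prod>k<d p. Gamma (A \<alpha> (p @ [k]) + real (Nn N (p @ [k]))) / Gamma (A \<alpha> (p @ [k])))"
    by (rule fac_eq[OF arity_at[OF assms]]) (simp_all add: alpha_at[OF assms] n_at[OF assms])
  also have "(\<Sum>k<d p. real (Nn N (p @ [k]))) = real (Nn N p)"
    using Nn_add[OF assms] by (metis of_nat_sum)
  finally show ?thesis unfolding A_add[OF assms] G_def .
qed


lemma SLt_eq: "SLt P d = SL" using SLt_def[OF finP nilP snocP] unfolding SL_def by simp

lemma SL_V': "s \<in> U \<Longrightarrow> q \<in> SL \<Longrightarrow> nodeAt ch s q \<in> V'"
proof -
  assume a: "s \<in> U" "q \<in> SL"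
  have qE: "q \<in> ExtP" using SL_ExtP a(2) by blast
  have "q \<notin> P" using a(2) unfolding SL_def by blast
  then have "nodeAt ch s q \<notin> R" using notR[OF a(1) qE] by blast
  moreover have "nodeAt ch s q \<in> V" using ext_V[OF vs[OF a(1)]] ExtP_eq[OF a(1)] qE by simp
  ultimately show ?thesis by (simp add: V'_def)
qed

lemma stage'_u: "stage V' ch' st u = U"
proof
  show "stage V' ch' st u \<subseteq> U" using sit'_iff by (auto simp: stage_def)
  show "U \<subseteq> stage V' ch' st u"
  proof
    fix v assume v: "v \<in> U"
    then have "is_situation V ch v" "v \<notin> R" "st v = u" using U_notR by (simp_all add: stage_def)
    then show "v \<in> stage V' ch' st u" using sit'_iff by (simp add: stage_def)
  qed
qed

lemma arity'_u: "stage_arity V' ch' st u = length qs"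
proof -
  have "(SOME v. v \<in> U) \<in> U" using U_ne by (simp add: some_in_eq)
  then show ?thesis unfolding stage_arity_def stage'_u by (simp add: ch'_def)
qed

lemma alpha'_u: "k < length qs \<Longrightarrow> alpha_jk V' ch' st \<alpha> u k = A \<alpha> (qs ! k)"
proof -
  assume k: "k < length qs"
  have "qs ! k \<in> SL" using k qs(2) nth_mem by blast
  then have "\<And>s. s \<in> U \<Longrightarrow> LB' (ch' s ! k) = LB (nodeAt ch s (qs ! k))"
    using ch'_nth k SL_V' LB'_eq by simp
  then show ?thesis unfolding alpha_jk_def A_def stage'_u leaves_eq by simp
qed

lemma n'_u: "k < length qs \<Longrightarrow> n_count V' ch' st N u k = Nn N (qs ! k)"
proof -
  assume k: "k < length qs"
  have "qs ! k \<in> SL" using k qs(2) nth_mem by blast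
  then have e: "\<And>s. s \<in> U \<Longrightarrow> LB' (ch' s ! k) = LB (nodeAt ch s (qs ! k))"
    using ch'_nth k SL_V' LB'_eq by simp
  have "{l \<in> leaves V' ch'. \<exists>v\<in>stage V' ch' st u. l \<in> LB' (ch' v ! k)} = S (qs ! k)"
    unfolding stage'_u leaves_eq S_def using e LB_leaves by auto
  then show ?thesis unfolding n_count_def Nn_def by simp
qed

lemma A_SL: "(\<Sum>q\<in>SL. A \<alpha> q) = A \<alpha> []"
  using tele_sum[OF finP nilP snocP, of "A \<alpha>"] A_add unfolding SLt_eq by simp

lemma Nn_SL: "(\<Sum>q\<in>SL. real (Nn N q)) = real (Nn N [])"
proof -
  have "\<And>p. p \<in> P \<Longrightarrow> real (Nn N p) = (\<Sum>k<d p. real (Nn N (p @ [k])))"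
    using Nn_add by (metis of_nat_sum)
  then show ?thesis using tele_sum[OF finP nilP snocP, of "\<lambda>q. real (Nn N q)"] unfolding SLt_eq by simp
qed

lemma fac'_u: "fac V' ch' st N \<alpha> u = Gamma (A \<alpha> []) / Gamma (A \<alpha> [] + real (Nn N [])) * (\<Prod>q\<in>SL. G \<alpha> N q)"
proof -
  have "fac V' ch' st N \<alpha> u = Gamma (\<Sum>k<length qs. A \<alpha> (qs ! k)) /
      Gamma ((\<Sum>k<length qs. A \<alpha> (qs ! k)) + (\<Sum>k<length qs. real (Nn N (qs ! k)))) *
      (\<Prod>k<length qs. Gamma (A \<alpha> (qs ! k) + real (Nn N (qs ! k))) / Gamma (A \<alpha> (qs ! k)))"
    by (rule fac_eq[OF arity'_u]) (simp_all add: alpha'_u n'_u)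
  also have "(\<Sum>k<length qs. A \<alpha> (qs ! k)) = A \<alpha> []"
    using sum_nth_distinct[OF qs(1), of "A \<alpha>"] qs(2) A_SL by simp
  also have "(\<Sum>k<length qs. real (Nn N (qs ! k))) = real (Nn N [])"
    using sum_nth_distinct[OF qs(1), of "\<lambda>q. real (Nn N q)"] qs(2) Nn_SL by simp
  also have "(\<Prod>k<length qs. Gamma (A \<alpha> (qs ! k) + real (Nn N (qs ! k))) / Gamma (A \<alpha> (qs ! k))) =
      (\<Prod>q\<in>SL. G \<alpha> N q)"
    using prod_nth_distinct[OF qs(1), of "G \<alpha> N"] qs(2) unfolding G_def by simp
  finally show ?thesis .
qed

abbreviation "L \<equiv> stage_labels V ch st"

lemma finL: "finite L"
proof -
  have "{v. is_situation V ch v} \<subseteq> V" by (auto simp: is_situation_def)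
  then have "finite {v. is_situation V ch v}" using finV by (rule finite_subset)
  then show ?thesis unfolding stage_labels_def by simp
qed

lemma JP_sub: "J ` P \<subseteq> L"
proof
  fix j assume "j \<in> J ` P"
  then obtain p where p: "p \<in> P" "j = J p" by blast
  have "is_situation V ch (nodeAt ch s0 p)" using vs_sit[OF vs[OF s0U] p(1)] by (simp add: is_situation_def)
  then show "j \<in> L" unfolding stage_labels_def J_def p(2) by blast
qed

lemma u_JP: "u \<in> J ` P" using J_nil nilP by (metis imageI)

lemma R_st: "v \<in> R \<Longrightarrow> st v \<in> J ` P" using R_sit by blast

lemma L'_eq: "stage_labels V' ch' st = (L - J ` P) \<union> {u}"
proof
  show "stage_labels V' ch' st \<subseteq> (L - J ` P) \<union> {u}"
  proof
    fix j assume "j \<in> stage_labels V' ch' st"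
    then obtain v where v: "is_situation V ch v" "v \<notin> R" "j = st v"
      unfolding stage_labels_def using sit'_iff by blast
    show "j \<in> (L - J ` P) \<union> {u}"
    proof (cases "j \<in> J ` P")
      case True
      then obtain p where p: "p \<in> P" "j = J p" by blast
      show ?thesis
      proof (cases "p = []")
        case True then show ?thesis using p J_nil by simp
      next
        case False
        obtain s where "s \<in> U" "v = nodeAt ch s p" using sat4[OF v(1) p(1) False] v(3) p(2) by metis
        then have "v \<in> R" using p(1) False unfolding R_def by blast
        then show ?thesis using v(2) by blast
      qed
    next
      case False
      then show ?thesis using v unfolding stage_labels_def by blast
    qed
  qed
  show "(L - J ` P) \<union> {u} \<subseteq> stage_labels V' ch' st"
  proof
    fix j assume j: "j \<in> (L - J ` P) \<union> {u}"
    show "j \<in> stage_labels V' ch' st"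
    proof (cases "j = u")
      case True
      have "is_situation V' ch' s0" using s0U U_notR sit'_iff by (simp add: stage_def)
      moreover have "st s0 = u" using s0U by (simp add: stage_def)
      ultimately show ?thesis unfolding stage_labels_def True by (metis imageI mem_Collect_eq)
    next
      case False
      then have "j \<in> L" "j \<notin> J ` P" using j by auto
      then obtain v where v: "is_situation V ch v" "j = st v" unfolding stage_labels_def by blast
      then have "v \<notin> R" using R_st \<open>j \<notin> J ` P\<close> by blast
      then have "is_situation V' ch' v" using v sit'_iff by simp
      then show ?thesis unfolding stage_labels_def v(2) by blast
    qed
  qed
qed

lemma fac_other:
  assumes j: "j \<in> L - J ` P"
  shows "fac V' ch' st N \<alpha> j = fac V ch st N \<alpha> j"
proof -
  have stg_eq: "stage V' ch' st j = stage V ch st j"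
  proof
    show "stage V' ch' st j \<subseteq> stage V ch st j" using sit'_iff by (auto simp: stage_def)
    show "stage V ch st j \<subseteq> stage V' ch' st j"
    proof
      fix v assume v: "v \<in> stage V ch st j"
      then have "v \<notin> R" using R_st j by (auto simp: stage_def)
      then show "v \<in> stage V' ch' st j" using v sit'_iff by (simp add: stage_def)
    qed
  qed
  have notU: "v \<notin> U" if "v \<in> stage V ch st j" for v
  proof
    assume "v \<in> U"
    then have "st v = u" by (simp add: stage_def)
    moreover have "st v = j" using that by (simp add: stage_def)
    ultimately show False using j u_JP by blast
  qed
  have ch'_eq: "ch' v = ch v" if "v \<in> stage V ch st j" for v
    using notU[OF that] by (simp add: ch'_def)
  define m where "m = stage_arity V ch st j"
  have ne: "stage V ch st j \<noteq> {}" using j unfolding stage_labels_def stage_def by blast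
  define v0 where "v0 = (SOME v. v \<in> stage V ch st j)"
  have v0: "v0 \<in> stage V ch st j" using ne unfolding v0_def by (simp add: some_in_eq)
  have ar: "stage_arity V' ch' st j = m"
    unfolding m_def stage_arity_def stg_eq using ch'_eq[OF v0[unfolded v0_def]] by simp
  have len: "length (ch v) = m" if "v \<in> stage V ch st j" for v
  proof -
    have "length (ch v) = length (ch v0)"
      using that v0 same_len by (auto simp: stage_def)
    then show ?thesis unfolding m_def stage_arity_def v0_def .
  qed
  have LBeq: "LB' (ch' v ! k) = LB (ch v ! k)" if "v \<in> stage V ch st j" "k < m" for v k
  proof -
    have vV: "v \<in> V" "v \<notin> R" using that(1) R_st j by (auto simp: stage_def is_situation_def)
    have c: "ch v ! k \<in> set (ch v)" using len[OF that(1)] that(2) by simp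
    have "ch v ! k \<notin> R" using child_notR[OF vV(1) notU[OF that(1)] vV(2) c] .
    moreover have "ch v ! k \<in> V" using chV[OF vV(1)] c by blast
    ultimately have "ch v ! k \<in> V'" by (simp add: V'_def)
    then show ?thesis using LB'_eq ch'_eq[OF that(1)] by simp
  qed
  have al: "alpha_jk V' ch' st \<alpha> j k = alpha_jk V ch st \<alpha> j k" if "k < m" for k
    unfolding alpha_jk_def stg_eq leaves_eq using LBeq that by simp
  have nc: "n_count V' ch' st N j k = n_count V ch st N j k" if "k < m" for k
  proof -
    have "{l \<in> leaves V' ch'. \<exists>v\<in>stage V' ch' st j. l \<in> LB' (ch' v ! k)} =
          {l \<in> leaves V ch. \<exists>v\<in>stage V ch st j. l \<in> LB (ch v ! k)}"
      unfolding stg_eq leaves_eq using LBeq that by auto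
    then show ?thesis unfolding n_count_def by simp
  qed
  have "fac V' ch' st N \<alpha> j = Gamma (\<Sum>k<m. alpha_jk V ch st \<alpha> j k) /
      Gamma ((\<Sum>k<m. alpha_jk V ch st \<alpha> j k) + (\<Sum>k<m. real (n_count V ch st N j k))) *
      (\<Prod>k<m. Gamma (alpha_jk V ch st \<alpha> j k + real (n_count V ch st N j k)) / Gamma (alpha_jk V ch st \<alpha> j k))"
    by (rule fac_eq[OF ar]) (simp_all add: al nc)
  also have "\<dots> = fac V ch st N \<alpha> j"
    by (rule fac_eq[OF m_def[symmetric], symmetric]) simp_all
  finally show ?thesis .
qed

lemma main:
  assumes "\<alpha> > 0"
  shows "BDepu V r ch st N \<alpha> = BDepu V' r ch' st N \<alpha>"
proof -
  have injJ: "inj_on J P" using norep by (intro inj_onI) blast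
  have Gnz: "\<And>p. p \<in> P \<Longrightarrow> G \<alpha> N p \<noteq> 0" using G_pos[OF assms] P_ExtP by (metis less_irrefl subsetD)
  have F: "fac V ch st N \<alpha> (J p) = (\<Prod>k<d p. G \<alpha> N (p @ [k])) / G \<alpha> N p" if "p \<in> P" for p
    unfolding fac_at[OF that] G_def by simp
  have "BDepu V r ch st N \<alpha> = (\<Prod>j\<in>L - J ` P. fac V ch st N \<alpha> j) * (\<Prod>j\<in>J ` P. fac V ch st N \<alpha> j)"
    unfolding BDepu_fac by (rule prod.subset_diff[OF JP_sub finL])
  also have "(\<Prod>j\<in>J ` P. fac V ch st N \<alpha> j) = (\<Prod>p\<in>P. fac V ch st N \<alpha> (J p))"
    by (rule prod.reindex[OF injJ, unfolded o_def])
  also have "\<dots> = (\<Prod>p\<in>P. (\<Prod>k<d p. G \<alpha> N (p @ [k])) / G \<alpha> N p)"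
    using F by simp
  also have "\<dots> = (\<Prod>q\<in>SL. G \<alpha> N q) / G \<alpha> N []"
    using tele_prod[OF finP nilP snocP, of "G \<alpha> N"] Gnz unfolding SLt_eq by blast
  also have "\<dots> = fac V' ch' st N \<alpha> u"
    unfolding fac'_u G_def by simp
  also have "(\<Prod>j\<in>L - J ` P. fac V ch st N \<alpha> j) = (\<Prod>j\<in>L - J ` P. fac V' ch' st N \<alpha> j)"
    using fac_other by simp
  finally have "BDepu V r ch st N \<alpha> = (\<Prod>j\<in>L - J ` P. fac V' ch' st N \<alpha> j) * fac V' ch' st N \<alpha> u" .
  moreover have "BDepu V' r ch' st N \<alpha> = fac V' ch' st N \<alpha> u * (\<Prod>j\<in>L - J ` P. fac V' ch' st N \<alpha> j)"
    unfolding BDepu_fac L'_eq using finL u_JP by (simp add: prod.insert)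
  ultimately show ?thesis by (simp add: mult.commute)
qed

end

theorem lemma5:
  fixes V :: "'v set" and r :: 'v and ch :: "'v \<Rightarrow> 'v list" and st :: "'v \<Rightarrow> 's"
    and u :: 's and T :: "'v \<Rightarrow> nat list set" and \<alpha> :: real and N :: "'v \<Rightarrow> nat"
  assumes "staged_tree V r ch st"
    and "square_free V ch st"
    and "u \<in> stage_labels V ch st"
    and "cond_saturated V ch st u T"
    and "\<alpha> > 0"
  shows "BDepu V r ch st N \<alpha> =
         BDepu (resize_V V ch st u T) r (resize_ch V ch st u T) st N \<alpha>"
proof -
  have et: "event_tree V r ch" using assms(1) unfolding staged_tree_def by blast
  have "rs V r ch st u T"
    unfolding rs_def rs_axioms_def etree_def using et assms(1-4) by blast
  then interpret R: rs V r ch st u T .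
  show ?thesis unfolding R.resize_V_eq R.resize_ch_eq using R.main[OF assms(5)] .
qed


end
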